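(* Let $\mathbb{K}$ be a field of characteristic zero and $(n_1,\dots,n_t)$ a tuple of integers. If $(n_1,\dots,n_t)$ forms an $\mathfrak{sl}_2$-chained Lie algebra, then for every $1\le k\le t$ the truncated tuple $(n_1,\dots,n_k)$ also forms an $\mathfrak{sl}_2$-chained Lie algebra.
   Context: For $d\ge0$, $V_d\subset\mathbb{K}[x,y]$ is the space of homogeneous polynomials of degree $d$, an $\mathfrak{sl}_2(\mathbb{K})$-module with $\mathfrak{sl}_2(\mathbb{K})$ identified with the span of $x\frac{\partial}{\partial y}$, $y\frac{\partial}{\partial x}$, $x\frac{\partial}{\partial x}-y\frac{\partial}{\partial y}$. For $f\in V_n$, $g\in V_m$, $0\le k\le\min(n,m)$, the transvection is $(f,g)_k=\frac{(m-k)!}{m!}\frac{(n-k)!}{n!}\sum_{i=0}^{k}(-1)^i\binom{k}{i}\frac{\partial^kf}{\partial x^{k-i}\partial y^{i}}\frac{\partial^kg}{\partial x^{i}\partial y^{k-i}}\in V_{n+m-2k}$. Given $(n_1,\dots,n_t)$ put $m_i=V_{d_i}$ with $d_i=in_1-2(n_2+\cdots+n_i)$ and $c_{ijk}=\frac{d_i+d_j-d_k}{2}$. The tuple forms an $\mathfrak{sl}_2$-chained Lie algebra if all $d_i\ge0$ and there are scalars $\alpha_{ijk}\in\mathbb{K}$ ($1\le i\le j$, $i+j\le k\le t$), with $\alpha_{1,j,j+1}\ne0$ for $j=1,\dots,t-1$ and $\alpha_{ijk}=0$ whenever $(\cdot,\cdot)_{c_{ijk}}$ is undefined or (for $i=j$)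 not skew-symmetric, such that the bracket on $\mathfrak{g}=\mathfrak{sl}_2(\mathbb{K})\oplus m_1\oplus\cdots\oplus m_t$ given by the commutator on $\mathfrak{sl}_2(\mathbb{K})$, $[s,u]=-[u,s]=s(u)$ for $s\in\mathfrak{sl}_2(\mathbb{K})$, and $[u,v]=-[v,u]=\sum_{k=i+j}^t\alpha_{ijk}(u,v)_{c_{ijk}}$ for $u\in m_i$, $v\in m_j$, $i\le j$, makes $\mathfrak{g}$ a Lie algebra whose lattice of ideals is the chain $0<m_t<m_{t-1}\oplus m_t<\cdots<m_1\oplus\cdots\oplus m_t<\mathfrak{g}$. *)

theory Defs
  imports "HOL-Computational_Algebra.Polynomial"
begin

text \<open>Bivariate polynomials over the field K are encoded as 'a poly poly:
  the outer variable is y, the inner variable is x.  The coefficient of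
  x^i y^j in f is coeff (coeff f j) i.\<close>

definition pX :: "'a::idom poly poly" where "pX = [:[:0, 1:]:]"
definition pY :: "'a::idom poly poly" where "pY = [:0, 1:]"
definition pC :: "'a::idom \<Rightarrow> 'a poly poly" where "pC a = [:[:a:]:]"

definition Dx :: "'a::idom poly poly \<Rightarrow> 'a poly poly" where "Dx f = map_poly pderiv f"
definition Dy :: "'a::idom poly poly \<Rightarrow> 'a poly poly" where "Dy f = pderiv f"

definition homog :: "nat \<Rightarrow> 'a::zero poly poly \<Rightarrow> bool" where
  "homog d f \<longleftrightarrow> (\<forall>i j. coeff (coeff f j) i \<noteq> 0 \<longrightarrow> i + j = d)"

definition Vd :: "nat \<Rightarrow> 'a::zero poly poly set" where "Vd d = {f. homog d f}"

definition transv :: "nat \<Rightarrow> nat \<Rightarrow> nat \<Rightarrow> 'a::field_char_0 poly poly \<Rightarrow> 'a poly poly \<Rightarrow> 'a poly poly" where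
  "transv n m k f g =
     pC ((fact (m - k) / fact m) * (fact (n - k) / fact n)) *
     (\<Sum>i = 0..k. pC ((-1) ^ i * of_nat (k choose i)) *
        ((Dx ^^ (k - i)) ((Dy ^^ i) f) * (Dx ^^ i) ((Dy ^^ (k - i)) g)))"

text \<open>sl_2(K): the triple (a,b,c) stands for a*(x d/dy) + b*(y d/dx) + c*(x d/dx - y d/dy).\<close>
definition sl2_act :: "'a::idom \<times> 'a \<times> 'a \<Rightarrow> 'a poly poly \<Rightarrow> 'a poly poly" where
  "sl2_act s f = (case s of (a, b, c) \<Rightarrow>
     pC a * pX * Dy f + pC b * pY * Dx f + pC c * (pX * Dx f - pY * Dy f))"

text \<open>The commutator of vector fields, written out in the basis
  E = x d/dy, F = y d/dx, H = x d/dx - y d/dy: [E,F]=H, [H,E]=2E, [H,F]=-2F.\<close>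
definition sl2_br :: "'a::idom \<times> 'a \<times> 'a \<Rightarrow> 'a \<times> 'a \<times> 'a \<Rightarrow> 'a \<times> 'a \<times> 'a" where
  "sl2_br s1 s2 = (case s1 of (a1, b1, c1) \<Rightarrow> case s2 of (a2, b2, c2) \<Rightarrow>
     (2 * (c1 * a2 - a1 * c2), 2 * (b1 * c2 - c1 * b2), a1 * b2 - a2 * b1))"

text \<open>Data attached to a tuple ns = (n_1,...,n_t), with n_i = ns ! (i - 1).\<close>
definition dd :: "int list \<Rightarrow> nat \<Rightarrow> int" where
  "dd ns i = int i * ns ! 0 - 2 * (\<Sum>j = 2..i. ns ! (j - 1))"

definition ccn :: "int list \<Rightarrow> nat \<Rightarrow> nat \<Rightarrow> nat \<Rightarrow> int" where
  "ccn ns i j k = dd ns i + dd ns j - dd ns k"   (* = 2 c_ijk *)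

definition cc :: "int list \<Rightarrow> nat \<Rightarrow> nat \<Rightarrow> nat \<Rightarrow> nat" where
  "cc ns i j k = nat (ccn ns i j k div 2)"

text \<open>(.,.)_{c_ijk} : V_{d_i} x V_{d_j} -> V_{d_k} is defined iff c_ijk is an integer
  with 0 <= c_ijk <= min(d_i, d_j).\<close>
definition tv_defined :: "int list \<Rightarrow> nat \<Rightarrow> nat \<Rightarrow> nat \<Rightarrow> bool" where
  "tv_defined ns i j k \<longleftrightarrow> even (ccn ns i j k) \<and> 0 \<le> ccn ns i j k
      \<and> ccn ns i j k div 2 \<le> min (dd ns i) (dd ns j)"

definition tv_skew :: "'a::field_char_0 itself \<Rightarrow> int list \<Rightarrow> nat \<Rightarrow> nat \<Rightarrow> bool" where
  "tv_skew _ ns i k \<longleftrightarrow>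
     (\<forall>f \<in> (Vd (nat (dd ns i)) :: 'a poly poly set). \<forall>g \<in> Vd (nat (dd ns i)).
        transv (nat (dd ns i)) (nat (dd ns i)) (cc ns i i k) f g
        = - transv (nat (dd ns i)) (nat (dd ns i)) (cc ns i i k) g f)"

text \<open>Elements of g = sl2 + m_1 + ... + m_t as pairs (s, u) with u i in m_i = V_{d_i}.\<close>
type_synonym 'a gelem = "('a \<times> 'a \<times> 'a) \<times> (nat \<Rightarrow> 'a poly poly)"

definition gcarrier :: "int list \<Rightarrow> 'a::zero gelem set" where
  "gcarrier ns = {(s, u). (\<forall>i. 1 \<le> i \<and> i \<le> length ns \<longrightarrow> u i \<in> Vd (nat (dd ns i)))
                        \<and> (\<forall>i. \<not> (1 \<le> i \<and> i \<le> length ns) \<longrightarrow> u i = 0)}"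

definition gadd :: "'a::idom gelem \<Rightarrow> 'a gelem \<Rightarrow> 'a gelem" where
  "gadd x y = (case x of ((a1, b1, c1), u1) \<Rightarrow> case y of ((a2, b2, c2), u2) \<Rightarrow>
      ((a1 + a2, b1 + b2, c1 + c2), \<lambda>i. u1 i + u2 i))"

definition gscale :: "'a::idom \<Rightarrow> 'a gelem \<Rightarrow> 'a gelem" where
  "gscale r x = (case x of ((a, b, c), u) \<Rightarrow> ((r * a, r * b, r * c), \<lambda>i. pC r * u i))"

definition gzero :: "'a::idom gelem" where
  "gzero = ((0, 0, 0), \<lambda>i. 0)"

definition gbr :: "int list \<Rightarrow> (nat \<Rightarrow> nat \<Rightarrow> nat \<Rightarrow> 'a::field_char_0) \<Rightarrow> 'a gelem \<Rightarrow> 'a gelem \<Rightarrow> 'a gelem" where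
  "gbr ns \<alpha> x y = (case x of (s1, u1) \<Rightarrow> case y of (s2, u2) \<Rightarrow>
     (sl2_br s1 s2,
      \<lambda>k. if 1 \<le> k \<and> k \<le> length ns then
             sl2_act s1 (u2 k) - sl2_act s2 (u1 k)
             + (\<Sum>i = 1..length ns. \<Sum>j = i..length ns.
                  if i + j \<le> k then
                    pC (\<alpha> i j k) *
                      (transv (nat (dd ns i)) (nat (dd ns j)) (cc ns i j k) (u1 i) (u2 j)
                       - (if i < j then transv (nat (dd ns i)) (nat (dd ns j)) (cc ns i j k) (u2 i) (u1 j)
                          else 0))
                  else 0)
           else 0))"

definition is_lie_algebra ::
  "'g set \<Rightarrow> ('g \<Rightarrow> 'g \<Rightarrow> 'g) \<Rightarrow> ('k \<Rightarrow> 'g \<Rightarrow> 'g) \<Rightarrow> 'g \<Rightarrow> ('g \<Rightarrow> 'g \<Rightarrow> 'g) \<Rightarrow> bool" where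
  "is_lie_algebra C add sc z br \<longleftrightarrow>
     (\<forall>x\<in>C. \<forall>y\<in>C. br x y \<in> C)
     \<and> (\<forall>r. \<forall>x\<in>C. \<forall>y\<in>C. \<forall>w\<in>C. br (add (sc r x) y) w = add (sc r (br x w)) (br y w))
     \<and> (\<forall>r. \<forall>x\<in>C. \<forall>y\<in>C. \<forall>w\<in>C. br w (add (sc r x) y) = add (sc r (br w x)) (br w y))
     \<and> (\<forall>x\<in>C. br x x = z)
     \<and> (\<forall>x\<in>C. \<forall>y\<in>C. \<forall>w\<in>C. add (add (br x (br y w)) (br y (br w x))) (br w (br x y)) = z)"

definition is_ideal ::
  "'g set \<Rightarrow> ('g \<Rightarrow> 'g \<Rightarrow> 'g) \<Rightarrow> ('k \<Rightarrow> 'g \<Rightarrow> 'g) \<Rightarrow> 'g \<Rightarrow> ('g \<Rightarrow> 'g \<Rightarrow> 'g) \<Rightarrow> 'g set \<Rightarrow> bool" where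
  "is_ideal C add sc z br I \<longleftrightarrow>
     I \<subseteq> C \<and> z \<in> I \<and> (\<forall>x\<in>I. \<forall>y\<in>I. add x y \<in> I) \<and> (\<forall>r. \<forall>x\<in>I. sc r x \<in> I)
     \<and> (\<forall>x\<in>C. \<forall>y\<in>I. br x y \<in> I)"

text \<open>m_r + ... + m_t (r = t+1 gives 0).\<close>
definition tail_ideal :: "int list \<Rightarrow> nat \<Rightarrow> 'a::idom gelem set" where
  "tail_ideal ns r = {(s, u) \<in> gcarrier ns. s = (0, 0, 0) \<and> (\<forall>i < r. u i = 0)}"

definition sl2_chained :: "'a::field_char_0 itself \<Rightarrow> int list \<Rightarrow> bool" where
  "sl2_chained T ns \<longleftrightarrow>
     (\<forall>i. 1 \<le> i \<and> i \<le> length ns \<longrightarrow> 0 \<le> dd ns i)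
     \<and> (\<exists>\<alpha> :: nat \<Rightarrow> nat \<Rightarrow> nat \<Rightarrow> 'a.
          (\<forall>j. 1 \<le> j \<and> j \<le> length ns - 1 \<longrightarrow> \<alpha> 1 j (j + 1) \<noteq> 0)
        \<and> (\<forall>i j k. 1 \<le> i \<and> i \<le> j \<and> i + j \<le> k \<and> k \<le> length ns
             \<and> (\<not> tv_defined ns i j k \<or> (i = j \<and> \<not> tv_skew T ns i k)) \<longrightarrow> \<alpha> i j k = 0)
        \<and> is_lie_algebra (gcarrier ns :: 'a gelem set) gadd gscale gzero (gbr ns \<alpha>)
        \<and> {I. is_ideal (gcarrier ns) gadd gscale gzero (gbr ns \<alpha>) I}
            = insert (gcarrier ns) (tail_ideal ns ` {1..length ns + 1}))"

end

theory Submission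
  imports Defs
begin

definition tr :: "nat \<Rightarrow> 'a::zero gelem \<Rightarrow> 'a gelem" where
  "tr k x = (fst x, \<lambda>i. if i \<le> k then snd x i else 0)"

lemma dd_take:
  assumes "1 \<le> k" "k \<le> length ns" "i \<le> k"
  shows "dd (take k ns) i = dd ns i"
proof -
  have a: "take k ns ! 0 = ns ! 0" using assms by simp
  have b: "(\<Sum>j = 2..i. take k ns ! (j - 1)) = (\<Sum>j = 2..i. ns ! (j - 1))"
    by (rule sum.cong) (use assms in auto)
  show ?thesis unfolding dd_def a b ..
qed

lemma cc_take:
  assumes "1 \<le> k" "k \<le> length ns" "i \<le> k" "j \<le> k" "l \<le> k"
  shows "cc (take k ns) i j l = cc ns i j l" "ccn (take k ns) i j l = ccn ns i j l"
  using assms by (simp_all add: cc_def ccn_def dd_take)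

lemma tvd_take:
  assumes "1 \<le> k" "k \<le> length ns" "i \<le> k" "j \<le> k" "l \<le> k"
  shows "tv_defined (take k ns) i j l = tv_defined ns i j l"
  using assms by (simp add: tv_defined_def cc_take dd_take)

lemma tvs_take:
  assumes "1 \<le> k" "k \<le> length ns" "i \<le> k" "l \<le> k"
  shows "tv_skew T (take k ns) i l = tv_skew T ns i l"
  using assms by (simp add: tv_skew_def cc_take dd_take)

lemma sum_reduce:
  fixes g :: "nat \<Rightarrow> nat \<Rightarrow> 'b::comm_monoid_add"
  assumes "m \<le> n" "\<And>i j. m < j \<Longrightarrow> g i j = 0"
  shows "(\<Sum>i = 1..n. \<Sum>j = i..n. g i j) = (\<Sum>i = 1..m. \<Sum>j = i..m. g i j)"
proof -
  have "(\<Sum>i = 1..n. \<Sum>j = i..n. g i j) = (\<Sum>i = 1..n. \<Sum>j = i..m. g i j)"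
  proof (rule sum.cong[OF refl])
    fix i show "(\<Sum>j = i..n. g i j) = (\<Sum>j = i..m. g i j)"
      by (rule sum.mono_neutral_right) (use assms in auto)
  qed
  also have "\<dots> = (\<Sum>i = 1..m. \<Sum>j = i..m. g i j)"
    by (rule sum.mono_neutral_right) (use assms in auto)
  finally show ?thesis .
qed

lemma tr_gadd: "tr k (gadd x y) = gadd (tr k x) (tr k y)"
  by (cases x; cases y) (auto simp: tr_def gadd_def fun_eq_iff)

lemma tr_gscale: "tr k (gscale r x) = gscale r (tr k x)"
  by (cases x) (auto simp: tr_def gscale_def fun_eq_iff)

lemma tr_gzero: "tr k gzero = gzero"
  by (auto simp: tr_def gzero_def fun_eq_iff)

lemma tr_carrier:
  assumes "1 \<le> k" "k \<le> length ns" "x \<in> gcarrier ns"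
  shows "tr k x \<in> gcarrier (take k ns)"
proof -
  obtain s u where x: "x = (s, u)" by (rule prod.exhaust)
  have h1: "\<And>i. 1 \<le> i \<and> i \<le> length ns \<Longrightarrow> u i \<in> Vd (nat (dd ns i))"
    and h2: "\<And>i. \<not> (1 \<le> i \<and> i \<le> length ns) \<Longrightarrow> u i = 0"
    using assms(3) unfolding x gcarrier_def by auto
  show ?thesis unfolding x tr_def gcarrier_def
    using assms(1,2) h1 h2 by (auto simp: dd_take)
qed

lemma carrier_take:
  assumes "1 \<le> k" "k \<le> length ns" "x \<in> gcarrier (take k ns)"
  shows "x \<in> gcarrier ns \<and> tr k x = x"
proof -
  obtain s u where x: "x = (s, u)" by (rule prod.exhaust)
  have h1: "\<And>i. 1 \<le> i \<and> i \<le> k \<Longrightarrow> u i \<in> Vd (nat (dd (take k ns) i))"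
    and h2: "\<And>i. \<not> (1 \<le> i \<and> i \<le> k) \<Longrightarrow> u i = 0"
    using assms unfolding x gcarrier_def by auto
  have "u i \<in> Vd (nat (dd ns i))" if "1 \<le> i" "i \<le> length ns" for i
  proof (cases "i \<le> k")
    case True thus ?thesis using h1 that assms dd_take by metis
  next
    case False thus ?thesis using h2 by (simp add: Vd_def homog_def)
  qed
  moreover have "\<not> (1 \<le> i \<and> i \<le> length ns) \<Longrightarrow> u i = 0" for i
    using h2 assms by auto
  ultimately have c: "x \<in> gcarrier ns" unfolding x gcarrier_def by auto
  have "(\<lambda>i. if i \<le> k then u i else 0) = u" using h2 assms by (auto simp: fun_eq_iff)
  then have "tr k x = x" unfolding x tr_def snd_conv fst_conv by simp
  with c show ?thesis by blast
qed

lemma tr_gbr: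
  assumes "1 \<le> k" "k \<le> length ns"
  shows "tr k (gbr ns \<alpha> x y) = gbr (take k ns) \<alpha> (tr k x) (tr k y)"
proof -
  obtain s1 u1 where x: "x = (s1, u1)" by (rule prod.exhaust)
  obtain s2 u2 where y: "y = (s2, u2)" by (rule prod.exhaust)
  define ns' where "ns' = take k ns"
  define v1 where "v1 = (\<lambda>i. if i \<le> k then u1 i else (0::'a poly poly))"
  define v2 where "v2 = (\<lambda>i. if i \<le> k then u2 i else (0::'a poly poly))"
  have len: "length ns' = k" using assms by (simp add: ns'_def)
  have tx: "tr k x = (s1, v1)" unfolding x tr_def v1_def fst_conv snd_conv ..
  have ty: "tr k y = (s2, v2)" unfolding y tr_def v2_def fst_conv snd_conv ..
  have sums: "(\<Sum>i = 1..length ns. \<Sum>j = i..length ns.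
                  if i + j \<le> l then
                    pC (\<alpha> i j l) *
                      (transv (nat (dd ns i)) (nat (dd ns j)) (cc ns i j l) (u1 i) (u2 j)
                       - (if i < j then transv (nat (dd ns i)) (nat (dd ns j)) (cc ns i j l) (u2 i) (u1 j)
                          else 0))
                  else 0)
     = (\<Sum>i = 1..length ns'. \<Sum>j = i..length ns'.
                  if i + j \<le> l then
                    pC (\<alpha> i j l) *
                      (transv (nat (dd ns' i)) (nat (dd ns' j)) (cc ns' i j l) (v1 i) (v2 j)
                       - (if i < j then transv (nat (dd ns' i)) (nat (dd ns' j)) (cc ns' i j l) (v2 i) (v1 j)
                          else 0))
                  else 0)" if l: "1 \<le> l" "l \<le> k" for l
    unfolding len
    apply (subst sum_reduce[OF assms(2)])
     apply (use l in auto)[1]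
    apply (rule sum.cong[OF refl])
    apply (rule sum.cong[OF refl])
    using l assms by (auto simp: ns'_def dd_take cc_take v1_def v2_def)
  have v1l: "v1 l = u1 l" "v2 l = u2 l" if "l \<le> k" for l using that by (auto simp: v1_def v2_def)
  show ?thesis
    unfolding tx ty unfolding x y tr_def gbr_def prod.case fst_conv snd_conv
    unfolding ns'_def[symmetric] len prod.inject
  proof (intro conjI refl ext)
    fix l
    show "(if l \<le> k then (if 1 \<le> l \<and> l \<le> length ns then
             sl2_act s1 (u2 l) - sl2_act s2 (u1 l)
             + (\<Sum>i = 1..length ns. \<Sum>j = i..length ns.
                  if i + j \<le> l then
                    pC (\<alpha> i j l) *
                      (transv (nat (dd ns i)) (nat (dd ns j)) (cc ns i j l) (u1 i) (u2 j)
                       - (if i < j then transv (nat (dd ns i)) (nat (dd ns j)) (cc ns i j l) (u2 i) (u1 j)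
                          else 0))
                  else 0)
           else 0) else 0) = 
          (if 1 \<le> l \<and> l \<le> k then
             sl2_act s1 (v2 l) - sl2_act s2 (v1 l)
             + (\<Sum>i = 1..k. \<Sum>j = i..k.
                  if i + j \<le> l then
                    pC (\<alpha> i j l) *
                      (transv (nat (dd ns' i)) (nat (dd ns' j)) (cc ns' i j l) (v1 i) (v2 j)
                       - (if i < j then transv (nat (dd ns' i)) (nat (dd ns' j)) (cc ns' i j l) (v2 i) (v1 j)
                          else 0))
                  else 0)
           else 0)"
    proof (cases "1 \<le> l \<and> l \<le> k")
      case True
      then show ?thesis using sums[of l] v1l[of l] assms len by simp
    next
      case False
      then show ?thesis by auto
    qed
  qed
qed

lemma homog_monom: "homog d (monom (1::'a::idom poly) d)"
  by (simp add: homog_def coeff_monom)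

theorem lemma4p8:
  fixes ns :: "int list" and k :: nat
  assumes "sl2_chained TYPE('a::field_char_0) ns"
    and "1 \<le> k" and "k \<le> length ns"
  shows "sl2_chained TYPE('a) (take k ns)"
proof -
  define ns' where "ns' = take k ns"
  have len: "length ns' = k" using assms(3) by (simp add: ns'_def)
  have H: "(\<forall>i. 1 \<le> i \<and> i \<le> length ns \<longrightarrow> 0 \<le> dd ns i)
     \<and> (\<exists>\<alpha> :: nat \<Rightarrow> nat \<Rightarrow> nat \<Rightarrow> 'a.
          (\<forall>j. 1 \<le> j \<and> j \<le> length ns - 1 \<longrightarrow> \<alpha> 1 j (j + 1) \<noteq> 0)
        \<and> (\<forall>i j k. 1 \<le> i \<and> i \<le> j \<and> i + j \<le> k \<and> k \<le> length ns
             \<and> (\<not> tv_defined ns i j k \<or> (i = j \<and> \<not> tv_skew TYPE('a) ns i k)) \<longrightarrow> \<alpha> i j k = 0)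
        \<and> is_lie_algebra (gcarrier ns :: 'a gelem set) gadd gscale gzero (gbr ns \<alpha>)
        \<and> {I. is_ideal (gcarrier ns) gadd gscale gzero (gbr ns \<alpha>) I}
            = insert (gcarrier ns) (tail_ideal ns ` {1..length ns + 1}))"
    using assms(1) unfolding sl2_chained_def .
  note dpos = conjunct1[OF H]
  obtain \<alpha> :: "nat \<Rightarrow> nat \<Rightarrow> nat \<Rightarrow> 'a" where P:
       "(\<forall>j. 1 \<le> j \<and> j \<le> length ns - 1 \<longrightarrow> \<alpha> 1 j (j + 1) \<noteq> 0)
        \<and> (\<forall>i j k. 1 \<le> i \<and> i \<le> j \<and> i + j \<le> k \<and> k \<le> length ns
             \<and> (\<not> tv_defined ns i j k \<or> (i = j \<and> \<not> tv_skew TYPE('a) ns i k)) \<longrightarrow> \<alpha> i j k = 0)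
        \<and> is_lie_algebra (gcarrier ns :: 'a gelem set) gadd gscale gzero (gbr ns \<alpha>)
        \<and> {I. is_ideal (gcarrier ns) gadd gscale gzero (gbr ns \<alpha>) I}
            = insert (gcarrier ns) (tail_ideal ns ` {1..length ns + 1})"
    using conjunct2[OF H] by (rule exE)
  note a1 = P[THEN conjunct1]
  note a0 = P[THEN conjunct2, THEN conjunct1]
  note lie = P[THEN conjunct2, THEN conjunct2, THEN conjunct1]
  note ids = P[THEN conjunct2, THEN conjunct2, THEN conjunct2]
  let ?C = "gcarrier ns :: 'a gelem set"
  let ?C' = "gcarrier ns' :: 'a gelem set"
  let ?B = "gbr ns \<alpha>"
  let ?B' = "gbr ns' \<alpha>"
  have trB: "tr k (?B x y) = ?B' (tr k x) (tr k y)" for x y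
    unfolding ns'_def by (rule tr_gbr[OF assms(2,3)])
  have trC: "x \<in> ?C \<Longrightarrow> tr k x \<in> ?C'" for x
    unfolding ns'_def by (rule tr_carrier[OF assms(2,3)])
  have C'C: "x \<in> ?C' \<Longrightarrow> x \<in> ?C" and C'tr: "x \<in> ?C' \<Longrightarrow> tr k x = x" for x
    unfolding ns'_def using carrier_take[OF assms(2,3)] by blast+
  have imgC: "tr k ` ?C = ?C'"
  proof
    show "tr k ` ?C \<subseteq> ?C'" using trC by blast
    show "?C' \<subseteq> tr k ` ?C"
    proof
      fix x assume "x \<in> ?C'"
      then have "x = tr k x" "x \<in> ?C" using C'C C'tr by auto
      then show "x \<in> tr k ` ?C" by blast
    qed
  qed
  have img_ideal: "is_ideal ?C' gadd gscale gzero ?B' (tr k ` J)"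
    if J: "is_ideal ?C gadd gscale gzero ?B J" for J
  proof -
    have J1: "J \<subseteq> ?C" "gzero \<in> J" "\<And>x y. x \<in> J \<Longrightarrow> y \<in> J \<Longrightarrow> gadd x y \<in> J"
      "\<And>r x. x \<in> J \<Longrightarrow> gscale r x \<in> J" "\<And>x y. x \<in> ?C \<Longrightarrow> y \<in> J \<Longrightarrow> ?B x y \<in> J"
      using J unfolding is_ideal_def by blast+
    have "tr k ` J \<subseteq> ?C'" using J1(1) trC by blast
    moreover have "gzero \<in> tr k ` J" using J1(2) tr_gzero[of k, symmetric] by (rule rev_image_eqI)
    moreover have "\<forall>x\<in>tr k ` J. \<forall>y\<in>tr k ` J. gadd x y \<in> tr k ` J"
    proof (intro ballI)
      fix x y assume "x \<in> tr k ` J" "y \<in> tr k ` J"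
      then obtain a b where "a \<in> J" "b \<in> J" "x = tr k a" "y = tr k b" by blast
      then have "gadd x y = tr k (gadd a b)" "gadd a b \<in> J" by (simp_all add: tr_gadd J1(3))
      then show "gadd x y \<in> tr k ` J" by blast
    qed
    moreover have "\<forall>r. \<forall>x\<in>tr k ` J. gscale r x \<in> tr k ` J"
    proof (intro ballI allI)
      fix r x assume "x \<in> tr k ` J"
      then obtain a where "a \<in> J" "x = tr k a" by blast
      then have "gscale r x = tr k (gscale r a)" "gscale r a \<in> J" by (simp_all add: tr_gscale J1(4))
      then show "gscale r x \<in> tr k ` J" by blast
    qed
    moreover have "\<forall>x\<in>?C'. \<forall>y\<in>tr k ` J. ?B' x y \<in> tr k ` J"
    proof (intro ballI)
      fix x y assume x: "x \<in> ?C'" and "y \<in> tr k ` J"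
      then obtain j where j: "j \<in> J" "y = tr k j" by blast
      have "?B' x y = tr k (?B x j)" using trB C'tr[OF x] j by simp
      moreover have "?B x j \<in> J" using J1(5) C'C[OF x] j by blast
      ultimately show "?B' x y \<in> tr k ` J" by blast
    qed
    ultimately show ?thesis unfolding is_ideal_def by blast
  qed
  have Cid: "is_ideal ?C gadd gscale gzero ?B ?C"
  proof -
    have "?C \<in> insert ?C (tail_ideal ns ` {1..length ns + 1})" by simp
    then show ?thesis unfolding ids[symmetric] by simp
  qed
  have pre_ideal: "is_ideal ?C gadd gscale gzero ?B {x \<in> ?C. tr k x \<in> I}"
    if I: "is_ideal ?C' gadd gscale gzero ?B' I" for I
  proof -
    have I1: "I \<subseteq> ?C'" "gzero \<in> I" "\<And>x y. x \<in> I \<Longrightarrow> y \<in> I \<Longrightarrow> gadd x y \<in> I"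
      "\<And>r x. x \<in> I \<Longrightarrow> gscale r x \<in> I" "\<And>x y. x \<in> ?C' \<Longrightarrow> y \<in> I \<Longrightarrow> ?B' x y \<in> I"
      using I unfolding is_ideal_def by blast+
    have C1: "\<And>x y. x \<in> ?C \<Longrightarrow> y \<in> ?C \<Longrightarrow> gadd x y \<in> ?C"
      "\<And>r x. x \<in> ?C \<Longrightarrow> gscale r x \<in> ?C" "gzero \<in> ?C"
      "\<And>x y. x \<in> ?C \<Longrightarrow> y \<in> ?C \<Longrightarrow> ?B x y \<in> ?C"
      using Cid unfolding is_ideal_def by blast+
    show ?thesis unfolding is_ideal_def
    proof (intro conjI)
      show "{x \<in> ?C. tr k x \<in> I} \<subseteq> ?C" by blast
      show "gzero \<in> {x \<in> ?C. tr k x \<in> I}" using C1(3) I1(2) by (simp add: tr_gzero)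
      show "\<forall>x\<in>{x \<in> ?C. tr k x \<in> I}. \<forall>y\<in>{x \<in> ?C. tr k x \<in> I}. gadd x y \<in> {x \<in> ?C. tr k x \<in> I}"
        using C1(1) I1(3) by (simp add: tr_gadd)
      show "\<forall>r. \<forall>x\<in>{x \<in> ?C. tr k x \<in> I}. gscale r x \<in> {x \<in> ?C. tr k x \<in> I}"
        using C1(2) I1(4) by (simp add: tr_gscale)
      show "\<forall>x\<in>?C. \<forall>y\<in>{x \<in> ?C. tr k x \<in> I}. ?B x y \<in> {x \<in> ?C. tr k x \<in> I}"
        using C1(4) I1(5) trC by (simp add: trB)
    qed
  qed
  have tail_img: "tr k ` (tail_ideal ns r :: 'a gelem set) = tail_ideal ns' r" for r
  proof
    show "tr k ` (tail_ideal ns r :: 'a gelem set) \<subseteq> tail_ideal ns' r"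
    proof
      fix z :: "'a gelem" assume "z \<in> tr k ` tail_ideal ns r"
      then obtain s u where su: "(s, u) \<in> ?C" "s = (0,0,0)" "\<forall>i<r. u i = 0" "z = tr k (s, u)"
        unfolding tail_ideal_def by blast
      have "z \<in> ?C'" using su trC by simp
      moreover have "z = (s, \<lambda>i. if i \<le> k then u i else 0)" using su(4) unfolding tr_def fst_conv snd_conv .
      ultimately show "z \<in> tail_ideal ns' r" using su unfolding tail_ideal_def by auto
    qed
    show "tail_ideal ns' r \<subseteq> tr k ` (tail_ideal ns r :: 'a gelem set)"
    proof
      fix z :: "'a gelem" assume z: "z \<in> tail_ideal ns' r"
      then have zc: "z \<in> ?C'" unfolding tail_ideal_def by auto
      have "z \<in> (tail_ideal ns r :: 'a gelem set)" using z C'C[OF zc] unfolding tail_ideal_def by auto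
      then show "z \<in> tr k ` tail_ideal ns r" using C'tr[OF zc] by (metis image_eqI)
    qed
  qed
  have tid: "is_ideal ?C gadd gscale gzero ?B (tail_ideal ns r)" if "r \<in> {1..length ns + 1}" for r
  proof -
    have "tail_ideal ns r \<in> insert ?C (tail_ideal ns ` {1..length ns + 1})" using that by simp
    then show ?thesis unfolding ids[symmetric] by simp
  qed
  have C'id: "is_ideal ?C' gadd gscale gzero ?B' ?C'" using img_ideal[OF Cid] imgC by simp
  have C'1: "\<And>x y. x \<in> ?C' \<Longrightarrow> y \<in> ?C' \<Longrightarrow> gadd x y \<in> ?C'"
      "\<And>r x. x \<in> ?C' \<Longrightarrow> gscale r x \<in> ?C'"
      "\<And>x y. x \<in> ?C' \<Longrightarrow> y \<in> ?C' \<Longrightarrow> ?B' x y \<in> ?C'"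
    using C'id unfolding is_ideal_def by blast+
  have L: "\<forall>x\<in>?C. \<forall>y\<in>?C. ?B x y \<in> ?C"
     "\<forall>r. \<forall>x\<in>?C. \<forall>y\<in>?C. \<forall>w\<in>?C. ?B (gadd (gscale r x) y) w = gadd (gscale r (?B x w)) (?B y w)"
     "\<forall>r. \<forall>x\<in>?C. \<forall>y\<in>?C. \<forall>w\<in>?C. ?B w (gadd (gscale r x) y) = gadd (gscale r (?B w x)) (?B w y)"
     "\<forall>x\<in>?C. ?B x x = gzero"
     "\<forall>x\<in>?C. \<forall>y\<in>?C. \<forall>w\<in>?C. gadd (gadd (?B x (?B y w)) (?B y (?B w x))) (?B w (?B x y)) = gzero"
    using lie unfolding is_lie_algebra_def by blast+
  have lie': "is_lie_algebra ?C' gadd gscale gzero ?B'"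
    unfolding is_lie_algebra_def
  proof (intro conjI ballI allI)
    fix x y assume "x \<in> ?C'" "y \<in> ?C'"
    then show "?B' x y \<in> ?C'" using C'1 by blast
  next
    fix r x y w assume xs: "x \<in> ?C'" "y \<in> ?C'" "w \<in> ?C'"
    note e = C'tr[OF xs(1)] C'tr[OF xs(2)] C'tr[OF xs(3)]
    have "tr k (?B (gadd (gscale r x) y) w) = tr k (gadd (gscale r (?B x w)) (?B y w))"
      using L(2) xs C'C by (simp only: ball_simps; metis)
    then show "?B' (gadd (gscale r x) y) w = gadd (gscale r (?B' x w)) (?B' y w)"
      unfolding trB tr_gadd tr_gscale e .
  next
    fix r x y w assume xs: "x \<in> ?C'" "y \<in> ?C'" "w \<in> ?C'"
    note e = C'tr[OF xs(1)] C'tr[OF xs(2)] C'tr[OF xs(3)]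
    have "tr k (?B w (gadd (gscale r x) y)) = tr k (gadd (gscale r (?B w x)) (?B w y))"
      using L(3) xs C'C by (simp only: ball_simps; metis)
    then show "?B' w (gadd (gscale r x) y) = gadd (gscale r (?B' w x)) (?B' w y)"
      unfolding trB tr_gadd tr_gscale e .
  next
    fix x assume xs: "x \<in> ?C'"
    note e = C'tr[OF xs(1)]
    have "tr k (?B x x) = tr k gzero" using L(4) xs C'C by metis
    then show "?B' x x = gzero" unfolding trB tr_gzero e .
  next
    fix x y w assume xs: "x \<in> ?C'" "y \<in> ?C'" "w \<in> ?C'"
    note e = C'tr[OF xs(1)] C'tr[OF xs(2)] C'tr[OF xs(3)]
    have "tr k (gadd (gadd (?B x (?B y w)) (?B y (?B w x))) (?B w (?B x y))) = tr k gzero"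
      using L(5) xs C'C by (simp only: ball_simps; metis)
    then show "gadd (gadd (?B' x (?B' y w)) (?B' y (?B' w x))) (?B' w (?B' x y)) = gzero"
      unfolding trB tr_gadd tr_gzero e .
  qed
  have idset: "{I. is_ideal ?C' gadd gscale gzero ?B' I} = insert ?C' (tail_ideal ns' ` {1..length ns' + 1})"
  proof
    show "insert ?C' (tail_ideal ns' ` {1..length ns' + 1}) \<subseteq> {I. is_ideal ?C' gadd gscale gzero ?B' I}"
    proof
      fix I assume "I \<in> insert ?C' (tail_ideal ns' ` {1..length ns' + 1})"
      then consider "I = ?C'" | r where "r \<in> {1..k+1}" "I = tail_ideal ns' r" using len by auto
      then show "I \<in> {I. is_ideal ?C' gadd gscale gzero ?B' I}"
      proof cases
        case 1 then show ?thesis using C'id by simp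
      next
        case 2
        then have "r \<in> {1..length ns + 1}" using assms(3) by auto
        then show ?thesis using img_ideal[OF tid] tail_img 2 by simp
      qed
    qed
    show "{I. is_ideal ?C' gadd gscale gzero ?B' I} \<subseteq> insert ?C' (tail_ideal ns' ` {1..length ns' + 1})"
    proof
      fix I assume "I \<in> {I. is_ideal ?C' gadd gscale gzero ?B' I}"
      then have I: "is_ideal ?C' gadd gscale gzero ?B' I" by simp
      define J where "J = {x \<in> ?C. tr k x \<in> I}"
      have IC: "I \<subseteq> ?C'" and gI: "gzero \<in> I" using I unfolding is_ideal_def by auto
      have IJ: "I = tr k ` J"
      proof
        show "tr k ` J \<subseteq> I" unfolding J_def by auto
        show "I \<subseteq> tr k ` J"
        proof
          fix x assume "x \<in> I"
          then have x: "x \<in> ?C'" "x \<in> I" using IC by auto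
          have "x \<in> J" "x = tr k x" unfolding J_def using C'C[OF x(1)] C'tr[OF x(1)] x by auto
          then show "x \<in> tr k ` J" by blast
        qed
      qed
      have "J \<in> {I. is_ideal ?C gadd gscale gzero ?B I}"
        using pre_ideal[OF I] unfolding J_def by simp
      then have "J \<in> insert ?C (tail_ideal ns ` {1..length ns + 1})"
        unfolding ids .
      then consider "J = ?C" | r where "r \<in> {1..length ns + 1}" "J = tail_ideal ns r" by auto
      then show "I \<in> insert ?C' (tail_ideal ns' ` {1..length ns' + 1})"
      proof cases
        case 1 then show ?thesis using IJ imgC by simp
      next
        case 2
        show ?thesis
        proof (cases "r \<le> k + 1")
          case True
          then show ?thesis using IJ 2 tail_img len by auto
        next
          case False
          define d where "d = nat (dd ns (k+1))"
          define e :: "'a gelem" where "e = ((0,0,0), \<lambda>i. if i = k+1 then monom 1 d else 0)"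
          have kt: "k + 1 \<le> length ns" using False 2 by auto
          have "e \<in> ?C" unfolding e_def gcarrier_def using kt
            by (auto simp: Vd_def homog_monom d_def homog_def)
          moreover have "tr k e = gzero" unfolding e_def tr_def gzero_def by (auto simp: fun_eq_iff)
          ultimately have "e \<in> J" unfolding J_def using gI by simp
          then have "snd e (k+1) = 0" using 2 False unfolding tail_ideal_def by auto
          then show ?thesis unfolding e_def by simp
        qed
      qed
    qed
  qed
  have a0': "\<forall>i j l. 1 \<le> i \<and> i \<le> j \<and> i + j \<le> l \<and> l \<le> length ns'
             \<and> (\<not> tv_defined ns' i j l \<or> (i = j \<and> \<not> tv_skew TYPE('a) ns' i l)) \<longrightarrow> \<alpha> i j l = 0"
  proof (intro allI impI)
    fix i j l assume h: "1 \<le> i \<and> i \<le> j \<and> i + j \<le> l \<and> l \<le> length ns'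
             \<and> (\<not> tv_defined ns' i j l \<or> (i = j \<and> \<not> tv_skew TYPE('a) ns' i l))"
    then have "l \<le> k" "i \<le> k" "j \<le> k" using len by auto
    then have "tv_defined ns' i j l = tv_defined ns i j l" "tv_skew TYPE('a) ns' i l = tv_skew TYPE('a) ns i l"
      using tvd_take tvs_take assms(2,3) unfolding ns'_def by blast+
    then show "\<alpha> i j l = 0" using a0 h len assms(3) by auto
  qed
  have dpos': "\<forall>i. 1 \<le> i \<and> i \<le> length ns' \<longrightarrow> 0 \<le> dd ns' i"
    using dpos dd_take assms(2,3) len unfolding ns'_def by auto
  have a1': "\<forall>j. 1 \<le> j \<and> j \<le> length ns' - 1 \<longrightarrow> \<alpha> 1 j (j + 1) \<noteq> 0"
    using a1 len assms(3) by auto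
  show ?thesis
    unfolding sl2_chained_def ns'_def[symmetric]
    apply (rule conjI[OF dpos'])
    apply (rule exI[of _ \<alpha>])
    using a1' a0' lie' idset by (intro conjI)
qed

end
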